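(* Let $p(x,y)$ be a real polynomial with $p(0,0)=0$, $\nabla p(0,0)=(0,0)$, $\dim\operatorname{Co}N_p=2$, such that for every $A\in\mathbb{N}^2$ the main $A$-quasi-homogeneous form of $p$ is nonnegative on $\mathbb{R}^2$. Let $A=(A_1,A_2)\in\mathcal{A}_p$ and suppose that for all $(x,y)$ with $\varphi_1^A(x,y)=0$, $x\neq0$, $y\neq0$ one has $\varphi_2^A(x,y)>0$. Let $x^{\chi_1}y^{\eta_1}$ be the monomial of the main term of $\varphi_2^A$. Then for every $u_0\in U_p(A)$ the system $x\neq0$, $y\neq0$, $x^{-A_2}y^{A_1}=u_0$, $x^{\chi_1}y^{\eta_1}g_2^A(u_0)<0$ has no real solution.
   Context: $\mathbb{N}=\{1,2,\dots\}$; $\mathbb{N}_0^2$ is the set of $(A_1,A_2)\in\mathbb{N}^2$ with $\gcd(A_1,A_2)=1$. $N_p$ is the support of $p$ and $\operatorname{Co}N_p$ its convex hull. For $A\in\mathbb{N}^2$ the main $A$-quasi-homogeneous form of $p$ is the sum of the terms of $p$ whose exponent vectors $k$ minimize $\langle A,k\rangle$ over $N_p$. For $A\in\mathbb{N}_0^2$, with $B_1^A<B_2^A<\dots$ the distinct values of $\langle A,k\rangle$ on $N_p$, $\varphi_i^A$ is the sum of terms of $p$ with $\langle A,k\rangle=B_i^A$. For such a form $\sum_i c_ix^{\gamma_i}y^{\delta_i}$ ($c_i\ne0$, $\gamma_1>\gamma_2>\dots$), its main term is $c_1x^{\gamma_1}y^{\delta_1}$ and its characteristic polynomial is $\sum_ic_iu^{(\gamma_1-\gamma_i)/A_2}$;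 $g_1^A,g_2^A$ are those of $\varphi_1^A,\varphi_2^A$. $\mathcal{A}_p$ is the set of $A\in\mathbb{N}_0^2$ such that $\varphi_1^A$ has at least three terms, $g_1^A\ge0$ on $\mathbb{R}$, and $g_1^A$ has a real root; $U_p(A)$ is the set of real roots of $g_1^A$. *)

theory Defs
  imports "HOL-Analysis.Analysis"
begin

text \<open>A real polynomial in two variables is represented by its coefficient function
  c :: nat \<times> nat \<Rightarrow> real with finite support; the exponent vector (i,j) stands for x^i y^j.\<close>

definition supp :: "(nat \<times> nat \<Rightarrow> real) \<Rightarrow> (nat \<times> nat) set" where
  "supp c = {k. c k \<noteq> 0}"

definition mono_eval :: "nat \<times> nat \<Rightarrow> real \<Rightarrow> real \<Rightarrow> real" where
  "mono_eval k x y = x ^ fst k * y ^ snd k"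

definition terms_eval :: "(nat \<times> nat \<Rightarrow> real) \<Rightarrow> (nat \<times> nat) set \<Rightarrow> real \<Rightarrow> real \<Rightarrow> real" where
  "terms_eval c S x y = (\<Sum>k\<in>S. c k * mono_eval k x y)"

definition peval :: "(nat \<times> nat \<Rightarrow> real) \<Rightarrow> real \<Rightarrow> real \<Rightarrow> real" where
  "peval c x y = terms_eval c (supp c) x y"

definition newton_pts :: "(nat \<times> nat \<Rightarrow> real) \<Rightarrow> (real \<times> real) set" where
  "newton_pts c = (\<lambda>k. (real (fst k), real (snd k))) ` supp c"

definition wdeg :: "nat \<times> nat \<Rightarrow> nat \<times> nat \<Rightarrow> nat" where
  "wdeg A k = fst A * fst k + snd A * snd k"

definition main_terms :: "(nat \<times> nat \<Rightarrow> real) \<Rightarrow> nat \<times> nat \<Rightarrow> (nat \<times> nat) set" where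
  "main_terms c A = {k \<in> supp c. wdeg A k = Min (wdeg A ` supp c)}"

text \<open>B_i^A: the i-th smallest (i \<ge> 1) value of <A,k> on N_p.\<close>
definition Blev :: "(nat \<times> nat \<Rightarrow> real) \<Rightarrow> nat \<times> nat \<Rightarrow> nat \<Rightarrow> nat" where
  "Blev c A i = sorted_list_of_set (wdeg A ` supp c) ! (i - 1)"

definition layer :: "(nat \<times> nat \<Rightarrow> real) \<Rightarrow> nat \<times> nat \<Rightarrow> nat \<Rightarrow> (nat \<times> nat) set" where
  "layer c A i = {k \<in> supp c. wdeg A k = Blev c A i}"

definition phi :: "(nat \<times> nat \<Rightarrow> real) \<Rightarrow> nat \<times> nat \<Rightarrow> nat \<Rightarrow> real \<Rightarrow> real \<Rightarrow> real" where
  "phi c A i x y = terms_eval c (layer c A i) x y"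

definition main_exp :: "(nat \<times> nat \<Rightarrow> real) \<Rightarrow> nat \<times> nat \<Rightarrow> nat \<Rightarrow> nat \<times> nat" where
  "main_exp c A i = (THE k. k \<in> layer c A i \<and> (\<forall>k'\<in>layer c A i. fst k' \<le> fst k))"

definition charpoly :: "(nat \<times> nat \<Rightarrow> real) \<Rightarrow> nat \<times> nat \<Rightarrow> nat \<Rightarrow> real \<Rightarrow> real" where
  "charpoly c A i u = (\<Sum>k\<in>layer c A i. c k * u ^ ((fst (main_exp c A i) - fst k) div snd A))"

definition admissible :: "(nat \<times> nat \<Rightarrow> real) \<Rightarrow> nat \<times> nat \<Rightarrow> bool" where
  "admissible c A \<longleftrightarrow> fst A \<ge> 1 \<and> snd A \<ge> 1 \<and> coprime (fst A) (snd A)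
     \<and> card (layer c A 1) \<ge> 3
     \<and> (\<forall>u. charpoly c A 1 u \<ge> 0) \<and> (\<exists>u. charpoly c A 1 u = 0)"

definition Uset :: "(nat \<times> nat \<Rightarrow> real) \<Rightarrow> nat \<times> nat \<Rightarrow> real set" where
  "Uset c A = {u. charpoly c A 1 u = 0}"

end

theory Submission
  imports Defs
begin

lemma term_factor:
  fixes x y :: real and a1 a2 :: nat
  assumes x: "x \<noteq> 0" and y: "y \<noteq> 0" and a2: "a2 \<ge> 1" and cop: "coprime a1 a2"
    and w: "a1 * fk + a2 * sk = a1 * fm + a2 * sm" and le: "fk \<le> fm"
  shows "x ^ fk * y ^ sk = x ^ fm * y ^ sm * (y ^ a1 / x ^ a2) ^ ((fm - fk) div a2)"
proof -
  have sle: "sm \<le> sk" proof (rule ccontr)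
    assume "\<not> sm \<le> sk"
    hence "a2 * sk < a2 * sm" using a2 by simp
    moreover have "a1 * fk \<le> a1 * fm" using le by simp
    ultimately show False using w by linarith
  qed
  have e: "a2 * (sk - sm) = a1 * (fm - fk)" using w le sle
    by (simp add: diff_mult_distrib2) 
  have "a2 dvd a1 * (fm - fk)" using e by (metis dvd_triv_left)
  hence "a2 dvd (fm - fk)" using cop by (metis coprime_commute coprime_dvd_mult_right_iff)
  then obtain q where q: "fm - fk = a2 * q" by blast
  have qd: "(fm - fk) div a2 = q" using q a2 by simp
  have "a2 * (sk - sm) = a2 * (a1 * q)" using e q by (simp add: mult_ac)
  hence sq: "sk - sm = a1 * q" using a2 by (metis mult_cancel_left not_one_le_zero)
  have fm: "fm = fk + a2 * q" using q le by simp
  have sk: "sk = sm + a1 * q" using sq sle by simp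
  show ?thesis unfolding qd fm sk using x y a2
    by (simp add: power_add power_mult power_divide field_simps)
qed

lemma layer_factor:
  fixes c :: "nat \<times> nat \<Rightarrow> real" and x y :: real
  assumes fin: "finite (supp c)" and x: "x \<noteq> 0" and y: "y \<noteq> 0"
    and a2: "snd A \<ge> 1" and cop: "coprime (fst A) (snd A)"
    and ne: "layer c A i \<noteq> {}"
  shows "terms_eval c (layer c A i) x y
     = mono_eval (main_exp c A i) x y * charpoly c A i (y ^ fst A / x ^ snd A)"
proof -
  let ?L = "layer c A i"
  have finL: "finite ?L" using fin unfolding layer_def by simp
  obtain m where m: "m \<in> ?L" "\<forall>k\<in>?L. fst k \<le> fst m"
  proof -
    have "finite (fst ` ?L)" "fst ` ?L \<noteq> {}" using finL ne by auto
    then have "Max (fst ` ?L) \<in> fst ` ?L" by (rule Max_in)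
    then obtain m where "m \<in> ?L" "fst m = Max (fst ` ?L)" by auto
    moreover have "\<forall>k\<in>?L. fst k \<le> fst m" using calculation finL by simp
    ultimately show ?thesis using that by blast
  qed
  have wd: "\<And>k. k \<in> ?L \<Longrightarrow> wdeg A k = Blev c A i" unfolding layer_def by simp
  have uniq: "\<And>k. k \<in> ?L \<Longrightarrow> \<forall>k'\<in>?L. fst k' \<le> fst k \<Longrightarrow> k = m"
  proof -
    fix k assume k: "k \<in> ?L" "\<forall>k'\<in>?L. fst k' \<le> fst k"
    have f1: "fst k \<le> fst m" using k(1) m(2) by blast
    have f2: "fst m \<le> fst k" using k(2) m(1) by blast
    have f: "fst k = fst m" using f1 f2 by (rule le_antisym)
    have "wdeg A k = wdeg A m" using wd k m by simp
    hence "snd A * snd k = snd A * snd m" using f unfolding wdeg_def by simp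
    hence "snd k = snd m" using a2 by simp
    thus "k = m" using f by (simp add: prod_eq_iff)
  qed
  have me: "main_exp c A i = m" unfolding main_exp_def
  proof (rule the_equality)
    show "m \<in> ?L \<and> (\<forall>k'\<in>?L. fst k' \<le> fst m)" using m by blast
  next
    fix k assume "k \<in> ?L \<and> (\<forall>k'\<in>?L. fst k' \<le> fst k)"
    thus "k = m" using uniq by blast
  qed
  have "terms_eval c ?L x y = (\<Sum>k\<in>?L. c k * (mono_eval m x y *
          (y ^ fst A / x ^ snd A) ^ ((fst m - fst k) div snd A)))"
    unfolding terms_eval_def
  proof (rule sum.cong[OF refl])
    fix k assume k: "k \<in> ?L"
    have w: "fst A * fst k + snd A * snd k = fst A * fst m + snd A * snd m"
      using wd[OF k] wd[OF m(1)] unfolding wdeg_def by simp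
    have tf: "x ^ fst k * y ^ snd k = x ^ fst m * y ^ snd m *
          (y ^ fst A / x ^ snd A) ^ ((fst m - fst k) div snd A)"
      using m(2) k by (intro term_factor[OF x y a2 cop w]) blast
    show "c k * mono_eval k x y = c k * (mono_eval m x y *
          (y ^ fst A / x ^ snd A) ^ ((fst m - fst k) div snd A))"
      unfolding mono_eval_def tf by (rule refl)
  qed
  also have "\<dots> = mono_eval m x y * charpoly c A i (y ^ fst A / x ^ snd A)"
    unfolding charpoly_def me by (simp add: sum_distrib_left mult_ac)
  finally show ?thesis using me by simp
qed

theorem mainTheorem7:
  fixes c :: "nat \<times> nat \<Rightarrow> real" and A :: "nat \<times> nat"
  assumes fin: "finite (supp c)"
    and p0: "peval c 0 0 = 0"
    and gradx: "((\<lambda>x. peval c x 0) has_real_derivative 0) (at 0)"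
    and grady: "((\<lambda>y. peval c 0 y) has_real_derivative 0) (at 0)"
    and dim2: "aff_dim (convex hull (newton_pts c)) = 2"
    and mainnn: "\<And>B x y. fst B \<ge> 1 \<Longrightarrow> snd B \<ge> 1 \<Longrightarrow>
                    terms_eval c (main_terms c B) x y \<ge> 0"
    and adm: "admissible c A"
    and phi2pos: "\<And>x y. phi c A 1 x y = 0 \<Longrightarrow> x \<noteq> 0 \<Longrightarrow> y \<noteq> 0 \<Longrightarrow> phi c A 2 x y > 0"
    and chi: "main_exp c A 2 = (\<chi>1, \<eta>1)"
  shows "\<forall>u0 \<in> Uset c A. \<not> (\<exists>x y::real. x \<noteq> 0 \<and> y \<noteq> 0 \<and> y ^ fst A / x ^ snd A = u0
            \<and> x ^ \<chi>1 * y ^ \<eta>1 * charpoly c A 2 u0 < 0)"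
proof (intro ballI notI)
  fix u0 assume u0: "u0 \<in> Uset c A"
  assume "\<exists>x y::real. x \<noteq> 0 \<and> y \<noteq> 0 \<and> y ^ fst A / x ^ snd A = u0
            \<and> x ^ \<chi>1 * y ^ \<eta>1 * charpoly c A 2 u0 < 0"
  then obtain x y :: real where x: "x \<noteq> 0" and y: "y \<noteq> 0" and u: "y ^ fst A / x ^ snd A = u0"
    and neg: "x ^ \<chi>1 * y ^ \<eta>1 * charpoly c A 2 u0 < 0" by blast
  have a2: "snd A \<ge> 1" and cop: "coprime (fst A) (snd A)" using adm unfolding admissible_def by auto
  have g1: "charpoly c A 1 u0 = 0" using u0 unfolding Uset_def by simp
  have "phi c A 1 x y = 0"
  proof (cases "layer c A 1 = {}")
    case True thus ?thesis unfolding phi_def terms_eval_def by simp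
  next
    case False thus ?thesis unfolding phi_def
      using layer_factor[OF fin x y a2 cop False] u g1 by simp
  qed
  hence pos: "phi c A 2 x y > 0" using phi2pos x y by blast
  show False
  proof (cases "layer c A 2 = {}")
    case True thus ?thesis using neg unfolding charpoly_def by simp
  next
    case False
    have "phi c A 2 x y = x ^ \<chi>1 * y ^ \<eta>1 * charpoly c A 2 u0" unfolding phi_def
      using layer_factor[OF fin x y a2 cop False] u chi unfolding mono_eval_def by simp
    thus ?thesis using pos neg by simp
  qed
qed

end
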